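(* For every $\gamma>0$, the matrix $\gamma 1$ is the unique strictly positive fixed point of the noncommutative Ricci flow having trace $n\gamma$; that is, if $c\in M_n$ is strictly positive with $\triangle\log c=0$ and $\tau(c)=n\gamma$, then $c=\gamma 1$.
   Context: Let $n\ge 2$, let $m\in\{1,\dots,n-1\}$ be relatively prime to $n$, and set $q=e^{2\pi i m/n}$. Let $M_n$ be the algebra of complex $n\times n$ matrices with identity $1$. Let $u=\mathrm{diag}(1,q,\dots,q^{n-1})$ and let $v$ be the cyclic shift matrix with $v_{j,j+1}=1$ for $j=1,\dots,n-1$, $v_{n,1}=1$, other entries $0$. Let $x,y$ be any Hermitian matrices with $u=e^{\frac{2\pi i}{n}x}$ and $v=e^{\frac{2\pi i}{n}y}$. Define $\delta_1(a)=[y,a]$, $\delta_2(a)=-[x,a]$ and $\triangle=\delta_1^2+\delta_2^2$ on $M_n$. $\tau$ is the usual trace; $\log$ of a strictly positive matrix is defined by functional calculus. The noncommutative Ricci flow is $\frac{d}{dt}c(t)=-\triangle\log c(t)$. *)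

theory Defs
  imports Complex_Main "Jordan_Normal_Form.Schur_Decomposition"
begin

text \<open>Complex n x n matrices are Jordan_Normal_Form matrices in carrier_mat n n.
  Indices are 0-based: row/column j corresponds to j+1 in the paper.\<close>

definition cmat_trace :: "complex mat \<Rightarrow> complex" where
  "cmat_trace A = (\<Sum>i<dim_row A. A $$ (i, i))"

definition hermitian_mat :: "nat \<Rightarrow> complex mat \<Rightarrow> bool" where
  "hermitian_mat n A \<longleftrightarrow> A \<in> carrier_mat n n \<and> mat_adjoint A = A"

definition unitary_mat :: "nat \<Rightarrow> complex mat \<Rightarrow> bool" where
  "unitary_mat n U \<longleftrightarrow> U \<in> carrier_mat n n \<and> mat_adjoint U * U = 1\<^sub>m n"

definition funcalc :: "nat \<Rightarrow> (real \<Rightarrow> complex) \<Rightarrow> complex mat \<Rightarrow> complex mat" where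
  "funcalc n f A = (THE B. \<exists>U (d :: nat \<Rightarrow> real). unitary_mat n U \<and>
      A = U * mat_diag n (\<lambda>i. complex_of_real (d i)) * mat_adjoint U \<and>
      B = U * mat_diag n (\<lambda>i. f (d i)) * mat_adjoint U)"

definition strictly_positive :: "nat \<Rightarrow> complex mat \<Rightarrow> bool" where
  "strictly_positive n c \<longleftrightarrow> hermitian_mat n c \<and>
     (\<forall>w \<in> carrier_vec n. w \<noteq> 0\<^sub>v n \<longrightarrow> 0 < Re ((c *\<^sub>v w) \<bullet>c w))"

definition mat_log :: "nat \<Rightarrow> complex mat \<Rightarrow> complex mat" where
  "mat_log n c = funcalc n (\<lambda>t. complex_of_real (ln t)) c"

definition clock_mat :: "nat \<Rightarrow> complex \<Rightarrow> complex mat" where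
  "clock_mat n q = mat_diag n (\<lambda>j. q ^ j)"

definition shift_mat :: "nat \<Rightarrow> complex mat" where
  "shift_mat n = mat n n (\<lambda>(i, j). if j = (i + 1) mod n then 1 else 0)"

definition delta1 :: "complex mat \<Rightarrow> complex mat \<Rightarrow> complex mat" where
  "delta1 y a = y * a - a * y"

definition delta2 :: "complex mat \<Rightarrow> complex mat \<Rightarrow> complex mat" where
  "delta2 x a = - (x * a - a * x)"

definition laplacian :: "complex mat \<Rightarrow> complex mat \<Rightarrow> complex mat \<Rightarrow> complex mat" where
  "laplacian x y a = delta1 y (delta1 y a) + delta2 x (delta2 x a)"

end

theory Submission
  imports Defs
begin


lemma adj_dim[simp]: "dim_row (mat_adjoint A) = dim_col A" "dim_col (mat_adjoint A) = dim_row A"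
  unfolding mat_adjoint_def by (auto simp: mat_of_rows_def)

lemma adj_index[simp]: "i < dim_col A \<Longrightarrow> j < dim_row A \<Longrightarrow> mat_adjoint A $$ (i,j) = cnj (A $$ (j,i))"
  unfolding mat_adjoint_def by (auto simp: mat_of_rows_def conjugate_complex_def)

lemma adj_carrier[simp]: "A \<in> carrier_mat n m \<Longrightarrow> mat_adjoint A \<in> carrier_mat m n"
  by (metis adj_dim carrier_matD carrier_matI)

lemma adj_adj[simp]: "mat_adjoint (mat_adjoint A) = (A :: complex mat)"
  by (rule eq_matI, auto)

lemma adj_mult: assumes "(A::complex mat) \<in> carrier_mat n k" "B \<in> carrier_mat k m"
  shows "mat_adjoint (A * B) = mat_adjoint B * mat_adjoint A"
  using assms by (intro eq_matI) (auto simp: scalar_prod_def ac_simps)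

lemma adj_one[simp]: "mat_adjoint (1\<^sub>m n) = (1\<^sub>m n :: complex mat)"
  by (rule eq_matI, auto)

lemma adj_diag_real: "mat_adjoint (mat_diag n (\<lambda>i. complex_of_real (d i))) = mat_diag n (\<lambda>i. complex_of_real (d i))"
  by (rule eq_matI, auto simp: mat_diag_def)

lemma unitary_right: assumes "unitary_mat n U" shows "U * mat_adjoint U = 1\<^sub>m n"
  using assms mat_mult_left_right_inverse[of "mat_adjoint U" n U] unfolding unitary_mat_def by auto

lemma mult_diag_right: "A \<in> carrier_mat k n \<Longrightarrow> i < k \<Longrightarrow> j < n \<Longrightarrow> (A * mat_diag n f) $$ (i,j) = A $$ (i,j) * f j"
  by (simp add: mat_diag_mult_right)
lemma mult_diag_left: "A \<in> carrier_mat n k \<Longrightarrow> i < n \<Longrightarrow> j < k \<Longrightarrow> (mat_diag n f * A) $$ (i,j) = f i * A $$ (i,j)"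
  by (simp add: mat_diag_mult_left)

abbreviation rdiag :: "nat \<Rightarrow> (nat \<Rightarrow> real) \<Rightarrow> complex mat" where
  "rdiag n d \<equiv> mat_diag n (\<lambda>i. complex_of_real (d i))"

lemma mat_diag_dims[simp]: "dim_row (mat_diag n f) = n" "dim_col (mat_diag n f) = n"
  unfolding mat_diag_def by auto

lemma intertw:
  fixes W :: "complex mat" and a b :: "nat \<Rightarrow> complex" and f :: "complex \<Rightarrow> complex"
  assumes W: "W \<in> carrier_mat n n"
    and h: "W * mat_diag n a = mat_diag n b * W"
  shows "W * mat_diag n (\<lambda>i. f (a i)) = mat_diag n (\<lambda>i. f (b i)) * W"
proof (rule eq_matI)
  fix i j assume i: "i < dim_row (mat_diag n (\<lambda>i. f (b i)) * W)" and j: "j < dim_col (mat_diag n (\<lambda>i. f (b i)) * W)"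
  hence i: "i < n" and j: "j < n" using W by auto
  from arg_cong[OF h, of "\<lambda>M. M $$ (i,j)"] have "W $$ (i,j) * a j = b i * W $$ (i,j)"
    using i j W unfolding mat_diag_mult_left[OF W] mat_diag_mult_right[OF W] by simp
  hence "W $$ (i,j) * (a j - b i) = 0" by (simp add: algebra_simps)
  hence "W $$ (i,j) = 0 \<or> a j = b i" by auto
  thus "(W * mat_diag n (\<lambda>i. f (a i))) $$ (i, j) = (mat_diag n (\<lambda>i. f (b i)) * W) $$ (i, j)"
    using i j W unfolding mat_diag_mult_left[OF W] mat_diag_mult_right[OF W] by auto
qed (insert W, auto)

lemma unitary_carrier: "unitary_mat n U \<Longrightarrow> U \<in> carrier_mat n n"
  unfolding unitary_mat_def by auto

lemma unitary_left: "unitary_mat n U \<Longrightarrow> mat_adjoint U * U = 1\<^sub>m n"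
  unfolding unitary_mat_def by auto

lemma unitary_left2: "unitary_mat n U \<Longrightarrow> X \<in> carrier_mat n k \<Longrightarrow> mat_adjoint U * (U * X) = X"
proof -
  assume U: "unitary_mat n U" and X: "X \<in> carrier_mat n k"
  have Uc: "U \<in> carrier_mat n n" using U by (rule unitary_carrier)
  have "mat_adjoint U * (U * X) = (mat_adjoint U * U) * X"
    using Uc X by (simp add: assoc_mult_mat[of _ n n _ n _ k])
  thus ?thesis using unitary_left[OF U] X by simp
qed
lemma unitary_right2: "unitary_mat n U \<Longrightarrow> X \<in> carrier_mat n k \<Longrightarrow> U * (mat_adjoint U * X) = X"
proof -
  assume U: "unitary_mat n U" and X: "X \<in> carrier_mat n k"
  have Uc: "U \<in> carrier_mat n n" using U by (rule unitary_carrier)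
  have "U * (mat_adjoint U * X) = (U * mat_adjoint U) * X"
    using Uc X by (simp add: assoc_mult_mat[of _ n n _ n _ k])
  thus ?thesis using unitary_right[OF U] X by simp
qed

lemma funcalc_unique:
  assumes U: "unitary_mat n U" and V: "unitary_mat n V"
    and eq: "U * rdiag n d * mat_adjoint U = V * rdiag n e * mat_adjoint V"
  shows "U * mat_diag n (\<lambda>i. f (d i)) * mat_adjoint U = V * mat_diag n (\<lambda>i. f (e i)) * mat_adjoint V"
proof -
  have Uc: "U \<in> carrier_mat n n" and Vc: "V \<in> carrier_mat n n" using U V by (auto simp: unitary_carrier)
  note c = Uc Vc adj_carrier[OF Uc] adj_carrier[OF Vc]
  define W where "W = mat_adjoint V * U"
  have Wc: "W \<in> carrier_mat n n" unfolding W_def using c by auto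
  have "W * rdiag n d = mat_adjoint V * (U * rdiag n d * mat_adjoint U) * U"
    unfolding W_def using c unitary_left2[OF U, of _ n] unitary_left[OF U] by (simp add: assoc_mult_mat[of _ n n _ n _ n] mult_carrier_mat[of _ n n _ n])
  also have "\<dots> = rdiag n e * W"
    unfolding eq W_def using c unitary_left2[OF V, of _ n] unitary_left[OF V] by (simp add: assoc_mult_mat[of _ n n _ n _ n] mult_carrier_mat[of _ n n _ n])
  finally have "W * rdiag n d = rdiag n e * W" .
  from intertw[OF Wc this, of "\<lambda>z. f (Re z)"]
  have I: "W * mat_diag n (\<lambda>i. f (d i)) = mat_diag n (\<lambda>i. f (e i)) * W" by simp
  have "U * mat_diag n (\<lambda>i. f (d i)) * mat_adjoint U = V * (W * mat_diag n (\<lambda>i. f (d i))) * mat_adjoint U"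
    unfolding W_def using c unitary_right2[OF V, of _ n] unitary_right[OF V] by (simp add: assoc_mult_mat[of _ n n _ n _ n] mult_carrier_mat[of _ n n _ n])
  also have "\<dots> = V * mat_diag n (\<lambda>i. f (e i)) * mat_adjoint V"
    using c unitary_right2[OF U, of _ n] unitary_right[OF U] unfolding I unfolding W_def by (simp add: assoc_mult_mat[of _ n n _ n _ n] mult_carrier_mat[of _ n n _ n])
  finally show ?thesis .
qed

lemma funcalc_eq:
  assumes U: "unitary_mat n U" and A: "A = U * rdiag n d * mat_adjoint U"
  shows "funcalc n f A = U * mat_diag n (\<lambda>i. f (d i)) * mat_adjoint U"
  unfolding funcalc_def
proof (rule the_equality)
  show "\<exists>U' d'. unitary_mat n U' \<and> A = U' * rdiag n d' * mat_adjoint U' \<and>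
          U * mat_diag n (\<lambda>i. f (d i)) * mat_adjoint U = U' * mat_diag n (\<lambda>i. f (d' i)) * mat_adjoint U'"
    using U A by blast
  fix B assume "\<exists>U' d'. unitary_mat n U' \<and> A = U' * rdiag n d' * mat_adjoint U' \<and>
          B = U' * mat_diag n (\<lambda>i. f (d' i)) * mat_adjoint U'"
  then obtain V e where V: "unitary_mat n V" and AV: "A = V * rdiag n e * mat_adjoint V"
     and B: "B = V * mat_diag n (\<lambda>i. f (e i)) * mat_adjoint V" by blast
  show "B = U * mat_diag n (\<lambda>i. f (d i)) * mat_adjoint U"
    unfolding B by (rule funcalc_unique[OF V U], insert A AV, simp)
qed



lemma comm_funcalc:
  assumes U: "unitary_mat n U" and A: "A = U * rdiag n d * mat_adjoint U"
    and h: "h \<in> carrier_mat n n" and hA: "h * A = A * h"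
  shows "h * funcalc n f A = funcalc n f A * h"
proof -
  have Uc: "U \<in> carrier_mat n n" using U by (rule unitary_carrier)
  note c = Uc adj_carrier[OF Uc] h
  note s = assoc_mult_mat[of _ n n _ n _ n] mult_carrier_mat[of _ n n _ n]
     unitary_left2[OF U, of _ n] unitary_left[OF U] unitary_right2[OF U, of _ n] unitary_right[OF U]
  define k where "k = mat_adjoint U * h * U"
  have kc: "k \<in> carrier_mat n n" unfolding k_def using c by auto
  have "k * rdiag n d = mat_adjoint U * (h * A) * U"
    unfolding k_def A using c by (simp add: s)
  also have "\<dots> = mat_adjoint U * (A * h) * U" by (simp add: hA)
  also have "\<dots> = rdiag n d * k"
    unfolding k_def A using c by (simp add: s)
  finally have "k * rdiag n d = rdiag n d * k" .
  from intertw[OF kc this, of "\<lambda>z. f (Re z)"]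
  have I: "k * mat_diag n (\<lambda>i. f (d i)) = mat_diag n (\<lambda>i. f (d i)) * k" by simp
  have "h * funcalc n f A = U * (k * mat_diag n (\<lambda>i. f (d i))) * mat_adjoint U"
    unfolding funcalc_eq[OF U A] k_def using c by (simp add: s)
  also have "\<dots> = funcalc n f A * h"
    unfolding I unfolding funcalc_eq[OF U A] k_def using c by (simp add: s)
  finally show ?thesis .
qed

lemma trace_add: "A \<in> carrier_mat n n \<Longrightarrow> B \<in> carrier_mat n n \<Longrightarrow> cmat_trace (A + B) = cmat_trace A + cmat_trace B"
  unfolding cmat_trace_def by (simp add: sum.distrib)

lemma trace_minus: "A \<in> carrier_mat n n \<Longrightarrow> B \<in> carrier_mat n n \<Longrightarrow> cmat_trace (A - B) = cmat_trace A - cmat_trace B"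
  unfolding cmat_trace_def by (simp add: sum_subtractf)

lemma trace_comm: assumes "A \<in> carrier_mat n k" "B \<in> carrier_mat k n"
  shows "cmat_trace (A * B) = cmat_trace (B * A)"
proof -
  have "cmat_trace (A * B) = (\<Sum>i<n. \<Sum>j<k. A $$ (i,j) * B $$ (j,i))"
    unfolding cmat_trace_def using assms by (simp add: scalar_prod_def atLeast0LessThan)
  also have "\<dots> = (\<Sum>j<k. \<Sum>i<n. B $$ (j,i) * A $$ (i,j))"
    by (subst sum.swap) (simp add: mult.commute)
  also have "\<dots> = cmat_trace (B * A)"
    unfolding cmat_trace_def using assms by (simp add: scalar_prod_def atLeast0LessThan)
  finally show ?thesis .
qed

lemma adj_minus: fixes A B :: "complex mat" assumes "A \<in> carrier_mat n k" "B \<in> carrier_mat n k" shows "mat_adjoint (A - B) = mat_adjoint A - mat_adjoint B"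
proof (rule eq_matI)
  fix i j assume "i < dim_row (mat_adjoint A - mat_adjoint B)" "j < dim_col (mat_adjoint A - mat_adjoint B)"
  hence i: "i < k" and j: "j < n" using assms by auto
  have "dim_col (A - B) = k" "dim_row (A - B) = n" using assms by auto
  hence "mat_adjoint (A - B) $$ (i, j) = cnj ((A - B) $$ (j,i))" using i j by (intro adj_index) auto
  also have "\<dots> = cnj (A $$ (j,i)) - cnj (B $$ (j,i))" using i j assms by auto
  finally show "mat_adjoint (A - B) $$ (i, j) = (mat_adjoint A - mat_adjoint B) $$ (i, j)"
    using i j assms by auto
qed (insert assms, auto)

lemma trace_adj_self: assumes K: "K \<in> carrier_mat n n"
  shows "cmat_trace (mat_adjoint K * K) = complex_of_real (\<Sum>i<n. \<Sum>j<n. (cmod (K $$ (j,i)))^2)"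
proof -
  have "cmat_trace (mat_adjoint K * K) = (\<Sum>i<n. \<Sum>j<n. cnj (K $$ (j,i)) * K $$ (j,i))"
    unfolding cmat_trace_def using K by (simp add: scalar_prod_def atLeast0LessThan)
  also have "\<dots> = (\<Sum>i<n. \<Sum>j<n. complex_of_real ((cmod (K $$ (j,i)))^2))"
    by (intro sum.cong refl) (metis complex_norm_square mult.commute)
  finally show ?thesis by (metis (no_types, lifting) of_real_sum sum.cong)
qed

lemma trace_adj_zero: assumes K: "K \<in> carrier_mat n n" and z: "cmat_trace (mat_adjoint K * K) = 0"
  shows "K = 0\<^sub>m n n"
proof -
  have "(\<Sum>i<n. \<Sum>j<n. (cmod (K $$ (j,i)))^2) = 0" using z trace_adj_self[OF K] by (metis of_real_eq_0_iff)
  hence "\<forall>i<n. (\<Sum>j<n. (cmod (K $$ (j,i)))^2) = 0"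
    by (subst (asm) sum_nonneg_eq_0_iff) (auto intro: sum_nonneg)
  hence "\<forall>i<n. \<forall>j<n. (cmod (K $$ (j,i)))^2 = 0"
    by (auto simp: sum_nonneg_eq_0_iff)
  thus ?thesis using K by (intro eq_matI) auto
qed

lemma trace_real_nonneg: assumes K: "K \<in> carrier_mat n n"
  shows "\<exists>r\<ge>0. cmat_trace (mat_adjoint K * K) = complex_of_real r"
  using trace_adj_self[OF K] by (intro exI[of _ "\<Sum>i<n. \<Sum>j<n. (cmod (K $$ (j,i)))^2"]) (auto intro!: sum_nonneg)

lemma comm_trace:
  assumes x: "hermitian_mat n x" and h: "hermitian_mat n h"
  defines "K \<equiv> x * h - h * x"
  shows "cmat_trace (h * (x * K - K * x)) = cmat_trace (mat_adjoint K * K)"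
proof -
  have xc: "x \<in> carrier_mat n n" and hc: "h \<in> carrier_mat n n" and xa: "mat_adjoint x = x" and ha: "mat_adjoint h = h"
    using x h unfolding hermitian_mat_def by auto
  have Kc: "K \<in> carrier_mat n n" unfolding K_def using xc hc by auto
  have aK: "mat_adjoint K = h * x - x * h"
    unfolding K_def using xc hc xa ha by (simp add: adj_minus[of _ n n] adj_mult[of _ n n])
  have "h * (x * K - K * x) = h * (x * K) - h * (K * x)"
    using xc hc Kc by (intro mult_minus_distrib_mat[of _ n n]) auto
  also have "h * (x * K) = h * x * K" using xc hc Kc by (simp add: assoc_mult_mat[of _ n n _ n _ n])
  finally have "h * (x * K - K * x) = h * x * K - h * (K * x)" .
  hence "cmat_trace (h * (x * K - K * x)) = cmat_trace (h * x * K) - cmat_trace (h * (K * x))"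
    using xc hc Kc by (simp add: trace_minus[of _ n])
  also have "cmat_trace (h * (K * x)) = cmat_trace (x * h * K)"
  proof -
    have "cmat_trace (h * (K * x)) = cmat_trace ((h * K) * x)"
      using xc hc Kc by (simp add: assoc_mult_mat[of _ n n _ n _ n])
    also have "\<dots> = cmat_trace (x * (h * K))" using xc hc Kc by (intro trace_comm[of _ n n]) auto
    also have "\<dots> = cmat_trace (x * h * K)" using xc hc Kc by (simp add: assoc_mult_mat[of _ n n _ n _ n])
    finally show ?thesis .
  qed
  also have "cmat_trace (h * x * K) - cmat_trace (x * h * K) = cmat_trace ((h * x - x * h) * K)"
    using xc hc Kc by (simp add: trace_minus[of _ n] minus_mult_distrib_mat[of _ n n])
  finally show ?thesis unfolding aK .
qed



lemma minus_eq_zero_mat: fixes A B :: "complex mat"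
  assumes "A \<in> carrier_mat n n" "B \<in> carrier_mat n n" "A - B = 0\<^sub>m n n" shows "A = B"
proof (rule eq_matI)
  fix i j assume "i < dim_row B" "j < dim_col B"
  with assms have "(A - B) $$ (i,j) = 0" by auto
  with assms(1,2) \<open>i < dim_row B\<close> \<open>j < dim_col B\<close> show "A $$ (i,j) = B $$ (i,j)" by (auto simp: carrier_matD)
qed (insert assms, auto)

lemma delta2_sq: assumes "x \<in> carrier_mat n n" "h \<in> carrier_mat n n"
  shows "delta2 x (delta2 x h) = x * (x * h - h * x) - (x * h - h * x) * x"
  unfolding delta2_def using assms by (intro eq_matI) (auto simp: carrier_matD)

lemma lap_comm:
  assumes x: "hermitian_mat n x" and y: "hermitian_mat n y" and h: "hermitian_mat n h"
    and L: "laplacian x y h = 0\<^sub>m n n"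
  shows "y * h = h * y" "x * h = h * x"
proof -
  have xc: "x \<in> carrier_mat n n" and yc: "y \<in> carrier_mat n n" and hc: "h \<in> carrier_mat n n"
    using x y h unfolding hermitian_mat_def by auto
  define Ky where "Ky = y * h - h * y"
  define Kx where "Kx = x * h - h * x"
  have Kyc: "Ky \<in> carrier_mat n n" and Kxc: "Kx \<in> carrier_mat n n" unfolding Ky_def Kx_def using xc yc hc by auto
  have Lx: "laplacian x y h = (y * Ky - Ky * y) + (x * Kx - Kx * x)"
    unfolding laplacian_def delta2_sq[OF xc hc] unfolding delta1_def Ky_def Kx_def ..
  have "0 = cmat_trace (h * laplacian x y h)"
    unfolding L cmat_trace_def using hc by simp
  also have "\<dots> = cmat_trace (h * (y * Ky - Ky * y)) + cmat_trace (h * (x * Kx - Kx * x))"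
  proof -
    have "h * ((y * Ky - Ky * y) + (x * Kx - Kx * x)) = h * (y * Ky - Ky * y) + h * (x * Kx - Kx * x)"
      using hc Kyc Kxc yc xc by (intro mult_add_distrib_mat[of _ n n]) auto
    moreover have "h * (y * Ky - Ky * y) \<in> carrier_mat n n" "h * (x * Kx - Kx * x) \<in> carrier_mat n n"
      using hc Kyc Kxc yc xc by (auto intro!: mult_carrier_mat minus_carrier_mat)
    ultimately show ?thesis unfolding Lx by (simp add: trace_add[of _ n])
  qed
  also have "\<dots> = cmat_trace (mat_adjoint Ky * Ky) + cmat_trace (mat_adjoint Kx * Kx)"
    unfolding Ky_def Kx_def using comm_trace[OF y h] comm_trace[OF x h] by simp
  finally have S: "cmat_trace (mat_adjoint Ky * Ky) + cmat_trace (mat_adjoint Kx * Kx) = 0" by simp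
  obtain r1 where r1: "r1 \<ge> 0" "cmat_trace (mat_adjoint Ky * Ky) = complex_of_real r1"
    using trace_real_nonneg[OF Kyc] by blast
  obtain r2 where r2: "r2 \<ge> 0" "cmat_trace (mat_adjoint Kx * Kx) = complex_of_real r2"
    using trace_real_nonneg[OF Kxc] by blast
  from S r1 r2 have "r1 + r2 = 0" by (metis of_real_add of_real_eq_0_iff)
  hence "r1 = 0" "r2 = 0" using r1 r2 by auto
  hence "Ky = 0\<^sub>m n n" "Kx = 0\<^sub>m n n" using trace_adj_zero[OF Kyc] trace_adj_zero[OF Kxc] r1 r2 by auto
  thus "y * h = h * y" "x * h = h * x" unfolding Ky_def Kx_def
    using xc yc hc by (auto intro: minus_eq_zero_mat[of _ n])
qed



lemma root_pow_ne_1: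
  fixes n m k :: nat
  assumes cop: "coprime m n" and k0: "0 < k" and kn: "k < n"
  shows "exp (2 * pi * \<i> * of_nat m / of_nat n) ^ k \<noteq> 1"
proof
  assume h: "exp (2 * pi * \<i> * of_nat m / of_nat n) ^ k = 1"
  define \<theta> where "\<theta> = 2 * pi * real m * real k / real n"
  have "exp (2 * pi * \<i> * of_nat m / of_nat n) ^ k = exp (of_nat k * (2 * pi * \<i> * of_nat m / of_nat n))"
    by (rule exp_of_nat_mult[symmetric])
  also have "of_nat k * (2 * pi * \<i> * of_nat m / of_nat n) = \<i> * complex_of_real \<theta>"
    unfolding \<theta>_def by simp
  finally have "cis \<theta> = 1" using h by (simp add: cis_conv_exp)
  hence "Re (cis \<theta>) = 1" by simp
  hence "cos \<theta> = 1" by simp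
  then obtain N :: int where N0: "\<theta> = real_of_int N * 2 * pi" using cos_one_2pi_int by blast
  hence N: "\<theta> = real_of_int N * (2 * pi)" by simp
  have n0: "real n \<noteq> 0" using kn by auto
  from N have "2 * pi * real m * real k = real_of_int N * (2 * pi) * real n" unfolding \<theta>_def using n0
    by (simp add: field_simps)
  hence "real m * real k = real_of_int N * real n" by simp
  hence "int m * int k = N * int n" by (metis of_int_eq_iff of_int_mult of_int_of_nat_eq)
  hence "int n dvd int m * int k" by (metis dvd_triv_right)
  hence "n dvd m * k" by (metis of_nat_dvd_iff of_nat_mult)
  hence "n dvd k" using cop by (metis coprime_commute coprime_dvd_mult_right_iff)
  thus False using k0 kn by (auto dest: dvd_imp_le)
qed

lemma root_inj:
  fixes n m :: nat
  assumes cop: "coprime m n" and i: "i < n" and j: "j < n" and e: "exp (2 * pi * \<i> * of_nat m / of_nat n) ^ i = exp (2 * pi * \<i> * of_nat m / of_nat n) ^ j"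
  shows "i = j"
proof (rule ccontr)
  let ?q = "exp (2 * pi * \<i> * of_nat m / of_nat n)"
  assume "i \<noteq> j"
  { fix a b assume ab: "a < b" "b < n" "?q ^ a = ?q ^ b"
    have "?q ^ b = ?q ^ a * ?q ^ (b - a)" proof -
      have "a + (b - a) = b" using ab by simp
      thus ?thesis by (metis power_add)
    qed
    hence "?q ^ (b - a) = 1" using ab by (simp add: exp_not_eq_zero)
    with root_pow_ne_1[OF cop, of "b - a"] ab have False by auto }
  with \<open>i \<noteq> j\<close> i j e show False by (metis linorder_neqE_nat)
qed

lemma commutant_scalar:
  fixes n m :: nat and h :: "complex mat"
  assumes cop: "coprime m n" and n2: "n \<ge> 2" and hc: "h \<in> carrier_mat n n"
    and hu: "h * clock_mat n (exp (2 * pi * \<i> * of_nat m / of_nat n)) = clock_mat n (exp (2 * pi * \<i> * of_nat m / of_nat n)) * h"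
    and hv: "h * shift_mat n = shift_mat n * h"
  shows "h = h $$ (0,0) \<cdot>\<^sub>m 1\<^sub>m n"
proof -
  let ?q = "exp (2 * pi * \<i> * of_nat m / of_nat n)"
  have off: "h $$ (i,j) = 0" if i: "i < n" and j: "j < n" and ij: "i \<noteq> j" for i j
  proof -
    from arg_cong[OF hu, of "\<lambda>M. M $$ (i,j)"] have "h $$ (i,j) * ?q ^ j = ?q ^ i * h $$ (i,j)"
      using i j hc unfolding clock_mat_def mat_diag_mult_left[OF hc] mat_diag_mult_right[OF hc] by simp
    hence "h $$ (i,j) * (?q ^ j - ?q ^ i) = 0" by (simp add: algebra_simps)
    moreover have "?q ^ j \<noteq> ?q ^ i" using root_inj[OF cop j i] ij by auto
    ultimately show ?thesis by simp
  qed
  have hd: "h $$ (i,k) = (if k = i then h $$ (i,i) else 0)" if "i < n" "k < n" for i k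
    using off that by auto
  have step: "h $$ (Suc i mod n, Suc i mod n) = h $$ (i,i)" if i: "i < n" for i
  proof -
    let ?j = "Suc i mod n"
    have j: "?j < n" using i by auto
    have sv: "shift_mat n \<in> carrier_mat n n" unfolding shift_mat_def by auto
    have "(h * shift_mat n) $$ (i, ?j) = (\<Sum>k<n. h $$ (i,k) * shift_mat n $$ (k, ?j))"
      using i j hc sv by (simp add: scalar_prod_def atLeast0LessThan)
    also have "\<dots> = (\<Sum>k<n. if k = i then h $$ (i,i) else 0)"
      using i j by (intro sum.cong refl) (auto simp: off shift_mat_def)
    also have "\<dots> = h $$ (i,i)" using i by simp
    finally have 1: "(h * shift_mat n) $$ (i, ?j) = h $$ (i,i)" .
    have "(shift_mat n * h) $$ (i, ?j) = (\<Sum>k<n. shift_mat n $$ (i,k) * h $$ (k, ?j))"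
      using i j hc sv by (simp add: scalar_prod_def atLeast0LessThan)
    also have "\<dots> = (\<Sum>k<n. if k = ?j then h $$ (?j,?j) else 0)"
      using i j by (intro sum.cong refl) (auto simp: off shift_mat_def)
    also have "\<dots> = h $$ (?j,?j)" using j by simp
    finally have 2: "(shift_mat n * h) $$ (i, ?j) = h $$ (?j,?j)" .
    from 1 2 hv show ?thesis by simp
  qed
  have diag: "h $$ (i,i) = h $$ (0,0)" if "i < n" for i
    using that
  proof (induction i)
    case (Suc i)
    hence "h $$ (Suc i mod n, Suc i mod n) = h $$ (i,i)" by (intro step) auto
    moreover have "Suc i mod n = Suc i" using Suc by auto
    ultimately show ?case using Suc by auto
  qed simp
  show ?thesis
  proof (rule eq_matI)
    fix i j assume "i < dim_row (h $$ (0,0) \<cdot>\<^sub>m 1\<^sub>m n)" "j < dim_col (h $$ (0,0) \<cdot>\<^sub>m 1\<^sub>m n)"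
    hence i: "i < n" and j: "j < n" by auto
    show "h $$ (i, j) = (h $$ (0,0) \<cdot>\<^sub>m 1\<^sub>m n) $$ (i, j)"
    proof (cases "i = j")
      case True thus ?thesis using i diag[OF i] by simp
    next
      case False thus ?thesis using i j off[OF i j] by simp
    qed
  qed (use hc in auto)
qed



lemma cprod_sum: fixes v w :: "complex vec"
  assumes "v \<in> carrier_vec n" "w \<in> carrier_vec n"
  shows "v \<bullet>c w = (\<Sum>k<n. v $ k * cnj (w $ k))"
  using assms by (simp add: scalar_prod_def atLeast0LessThan conjugate_complex_def)

lemma unit_completion:
  fixes v :: "complex vec"
  assumes v: "v \<in> carrier_vec n" and v0: "v \<noteq> 0\<^sub>v n"
  shows "\<exists>W c. unitary_mat n W \<and> col W 0 = c \<cdot>\<^sub>v v"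
proof -
  interpret cof_vec_space n "TYPE(complex)" .
  define b where "b = basis_completion v"
  define ws where "ws = gram_schmidt n b"
  from basis_completion[OF v v0, folded b_def]
  have dist_b: "distinct b" and indep: "\<not> lin_dep (set b)" and b: "set b \<subseteq> carrier_vec n"
    and hdb: "hd b = v" and len_b: "length b = n" by auto
  have n: "n \<noteq> 0" using v v0 by (metis carrier_vecD eq_vecI index_zero_vec(2) less_nat_zero_code)
  from hdb len_b n obtain vs where bv: "b = v # vs" by (cases b, auto)
  from gram_schmidt_result[OF b dist_b indep refl, folded ws_def]
  have wsc: "set ws \<subseteq> carrier_vec n" and orth: "corthogonal ws" and lws: "length ws = n"
    by (auto simp: len_b)
  from gram_schmidt_hd[OF v, of vs, folded bv] have hdws: "hd ws = v" unfolding ws_def .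
  have ws0: "ws ! 0 = v" using hdws n lws by (metis hd_conv_nth list.size(3))
  define r where "r q = sqrt (\<Sum>k<n. (cmod (ws ! q $ k))^2)" for q
  have wq: "ws ! q \<in> carrier_vec n" if "q < n" for q using wsc lws that by auto
  have selfp: "ws ! q \<bullet>c ws ! q = complex_of_real ((r q)^2)" if q: "q < n" for q
  proof -
    have "ws ! q \<bullet>c ws ! q = (\<Sum>k<n. complex_of_real ((cmod (ws ! q $ k))^2))"
      unfolding cprod_sum[OF wq[OF q] wq[OF q]] by (intro sum.cong refl) (metis complex_norm_square)
    also have "\<dots> = complex_of_real ((r q)^2)" unfolding r_def
      by (subst real_sqrt_pow2) (auto intro: sum_nonneg)
    finally show ?thesis .
  qed
  have rpos: "r q \<noteq> 0" if q: "q < n" for q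
  proof
    assume "r q = 0"
    hence "ws ! q \<bullet>c ws ! q = 0" using selfp[OF q] by simp
    thus False using corthogonalD[OF orth, of q q] q lws by auto
  qed
  define W where "W = mat n n (\<lambda>(p,q). ws ! q $ p / complex_of_real (r q))"
  have Wc: "W \<in> carrier_mat n n" unfolding W_def by auto
  have "mat_adjoint W * W = 1\<^sub>m n"
  proof (rule eq_matI)
    fix p q assume "p < dim_row (1\<^sub>m n :: complex mat)" "q < dim_col (1\<^sub>m n :: complex mat)"
    hence p: "p < n" and q: "q < n" by auto
    have "(mat_adjoint W * W) $$ (p,q) = (\<Sum>k<n. cnj (W $$ (k,p)) * W $$ (k,q))"
      using p q Wc by (simp add: scalar_prod_def atLeast0LessThan)
    also have "\<dots> = (\<Sum>k<n. ws ! q $ k * cnj (ws ! p $ k)) / (complex_of_real (r p) * complex_of_real (r q))"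
    proof -
      have "(\<Sum>k<n. cnj (W $$ (k,p)) * W $$ (k,q)) = (\<Sum>k<n. ws ! q $ k * cnj (ws ! p $ k) / (complex_of_real (r p) * complex_of_real (r q)))"
        by (intro sum.cong refl) (simp add: W_def p q)
      thus ?thesis by (simp add: sum_divide_distrib)
    qed
    also have "\<dots> = (ws ! q \<bullet>c ws ! p) / (complex_of_real (r p) * complex_of_real (r q))"
      unfolding cprod_sum[OF wq[OF q] wq[OF p]] ..
    also have "\<dots> = 1\<^sub>m n $$ (p,q)"
    proof (cases "p = q")
      case True
      thus ?thesis using selfp[OF q] rpos[OF q] p by (simp add: power2_eq_square)
    next
      case False
      thus ?thesis using corthogonalD[OF orth, of q p] p q lws by auto
    qed
    finally show "(mat_adjoint W * W) $$ (p,q) = 1\<^sub>m n $$ (p,q)" .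
  qed (use Wc in auto)
  hence "unitary_mat n W" unfolding unitary_mat_def using Wc by auto
  moreover have "col W 0 = (1 / complex_of_real (r 0)) \<cdot>\<^sub>v v"
    unfolding W_def using n v ws0 by (intro eq_vecI) auto
  ultimately show ?thesis by blast
qed



lemma udu_index: fixes U :: "complex mat"
  assumes U: "U \<in> carrier_mat n n" and i: "i < n" and j: "j < n"
  shows "(U * mat_diag n f * mat_adjoint U) $$ (i,j) = (\<Sum>k<n. U $$ (i,k) * f k * cnj (U $$ (j,k)))"
  unfolding mat_diag_mult_right[OF U] using U i j by (simp add: scalar_prod_def atLeast0LessThan)

lemma unitary_entries: assumes U: "unitary_mat n U" and p: "p < n" and q: "q < n"
  shows "(\<Sum>k<n. cnj (U $$ (k,p)) * U $$ (k,q)) = (if p = q then 1 else 0)"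
proof -
  have Uc: "U \<in> carrier_mat n n" using U by (rule unitary_carrier)
  have "(\<Sum>k<n. cnj (U $$ (k,p)) * U $$ (k,q)) = (mat_adjoint U * U) $$ (p,q)"
    using Uc p q by (simp add: scalar_prod_def atLeast0LessThan)
  also have "\<dots> = (if p = q then 1 else 0)" using unitary_left[OF U] p q by simp
  finally show ?thesis .
qed

lemma unitary_mult: assumes U: "unitary_mat n U" and V: "unitary_mat n V"
  shows "unitary_mat n (U * V)"
proof -
  have Uc: "U \<in> carrier_mat n n" using U by (rule unitary_carrier)
  have Vc: "V \<in> carrier_mat n n" using V by (rule unitary_carrier)
  have "mat_adjoint (U * V) * (U * V) = mat_adjoint V * (mat_adjoint U * (U * V))"
    using Uc Vc by (simp add: adj_mult[of _ n n _ n] assoc_mult_mat[of _ n n _ n _ n] mult_carrier_mat[of _ n n _ n])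
  also have "\<dots> = 1\<^sub>m n" using unitary_left2[OF U Vc] unitary_left[OF V] by simp
  finally show ?thesis unfolding unitary_mat_def using Uc Vc by auto
qed

lemma spectral:
  "hermitian_mat n A \<Longrightarrow> \<exists>U d. unitary_mat n U \<and> A = U * rdiag n d * mat_adjoint U"
proof (induction n arbitrary: A)
  case 0
  hence Ac: "A \<in> carrier_mat 0 0" unfolding hermitian_mat_def by auto
  have "unitary_mat 0 (1\<^sub>m 0)" unfolding unitary_mat_def by auto
  moreover have "A = 1\<^sub>m 0 * rdiag 0 (\<lambda>_. 0) * mat_adjoint (1\<^sub>m 0)" using Ac by (intro eq_matI) auto
  ultimately show ?case by (intro exI[of _ "1\<^sub>m 0"] exI[of _ "\<lambda>_::nat. 0::real"]) auto
next
  case (Suc n1 A)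
  define n where "n = Suc n1"
  have Ac: "A \<in> carrier_mat n n" and Aa: "mat_adjoint A = A"
    using Suc.prems unfolding hermitian_mat_def n_def by auto
  obtain es where cp: "char_poly A = (\<Prod>a\<leftarrow>es. [:-a,1:])" and les: "length es = n"
    using char_poly_factorized[OF Ac] by blast
  then obtain e es' where "es = e # es'" unfolding n_def by (cases es) auto
  hence "poly (char_poly A) e = 0" using cp by simp
  hence "eigenvalue A e" using eigenvalue_root_char_poly[OF Ac] by simp
  then obtain v where v: "v \<in> carrier_vec n" "v \<noteq> 0\<^sub>v n" and Av: "A *\<^sub>v v = e \<cdot>\<^sub>v v"
    unfolding eigenvalue_def eigenvector_def using Ac by auto
  obtain W c where W: "unitary_mat n W" and Wc0: "col W 0 = c \<cdot>\<^sub>v v"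
    using unit_completion[OF v] by blast
  have Wc: "W \<in> carrier_mat n n" using W by (rule unitary_carrier)
  have n0: "0 < n" unfolding n_def by simp
  note s = assoc_mult_mat[of _ n n _ n _ n] mult_carrier_mat[of _ n n _ n]
  define A' where "A' = mat_adjoint W * A * W"
  have A'c: "A' \<in> carrier_mat n n" using Wc Ac unfolding A'_def by auto
  have A'a: "mat_adjoint A' = A'" unfolding A'_def using Wc Ac Aa
    by (simp add: adj_mult[of _ n n _ n] s)
  have colAW: "col (A * W) 0 = e \<cdot>\<^sub>v col W 0"
  proof -
    have "col (A * W) 0 = A *\<^sub>v col W 0" by (rule col_mult2[OF Ac Wc n0])
    also have "\<dots> = c \<cdot>\<^sub>v (A *\<^sub>v v)" unfolding Wc0 by (rule mult_mat_vec[OF Ac v(1)])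
    also have "\<dots> = c \<cdot>\<^sub>v (e \<cdot>\<^sub>v v)" unfolding Av ..
    also have "\<dots> = e \<cdot>\<^sub>v (c \<cdot>\<^sub>v v)" using v(1) by (intro eq_vecI) auto
    finally show ?thesis unfolding Wc0 .
  qed
  have A'0: "A' $$ (i,0) = (if i = 0 then e else 0)" if i: "i < n" for i
  proof -
    have "A' $$ (i,0) = (mat_adjoint W * (A * W)) $$ (i,0)" unfolding A'_def using Ac Wc by (simp add: s)
    also have "\<dots> = row (mat_adjoint W) i \<bullet> col (A * W) 0" using Ac Wc i n0 by simp
    also have "\<dots> = e * (row (mat_adjoint W) i \<bullet> col W 0)" unfolding colAW using Wc i by simp
    also have "row (mat_adjoint W) i \<bullet> col W 0 = (mat_adjoint W * W) $$ (i,0)" using Wc i n0 by simp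
    also have "\<dots> = (if i = 0 then 1 else 0)" using unitary_left[OF W] i n0 by simp
    finally show ?thesis by simp
  qed
  have A'0': "A' $$ (0,j) = (if j = 0 then cnj e else 0)" if j: "j < n" for j
  proof -
    have "A' $$ (0,j) = mat_adjoint A' $$ (0,j)" using A'a by simp
    also have "\<dots> = cnj (A' $$ (j,0))" using A'c j n0 by simp
    finally show ?thesis using A'0[OF j] by simp
  qed
  have ecnj: "e = cnj e" using A'0[OF n0] A'0'[OF n0] by simp
  have ereal: "e = complex_of_real (Re e)"
  proof -
    from ecnj have "Im e = Im (cnj e)" by simp
    hence "Im e = - Im e" by simp
    hence "Im e = 0" by simp
    thus ?thesis by (simp add: complex_eq_iff)
  qed
  define A3 where "A3 = mat n1 n1 (\<lambda>(i,j). A' $$ (Suc i, Suc j))"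
  have A3h: "hermitian_mat n1 A3" unfolding hermitian_mat_def
  proof
    show "A3 \<in> carrier_mat n1 n1" unfolding A3_def by auto
    show "mat_adjoint A3 = A3"
    proof (rule eq_matI)
      fix i j assume "i < dim_row A3" "j < dim_col A3"
      hence i: "i < n1" and j: "j < n1" unfolding A3_def by auto
      have "mat_adjoint A3 $$ (i,j) = cnj (A' $$ (Suc j, Suc i))" using i j unfolding A3_def by simp
      also have "\<dots> = mat_adjoint A' $$ (Suc i, Suc j)" using i j A'c unfolding n_def by simp
      also have "\<dots> = A3 $$ (i,j)" using i j A'a unfolding A3_def by simp
      finally show "mat_adjoint A3 $$ (i,j) = A3 $$ (i,j)" .
    qed (auto simp: A3_def)
  qed
  from Suc.IH[OF A3h] obtain U3 d3 where U3: "unitary_mat n1 U3" and A3e: "A3 = U3 * rdiag n1 d3 * mat_adjoint U3"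
    by blast
  have U3c: "U3 \<in> carrier_mat n1 n1" using U3 by (rule unitary_carrier)
  define B where "B = mat n n (\<lambda>(i,j). if i = 0 then (if j = 0 then 1 else 0) else if j = 0 then 0 else U3 $$ (i - 1, j - 1))"
  define d where "d = (\<lambda>i. if i = 0 then Re e else d3 (i - 1))"
  have Bc: "B \<in> carrier_mat n n" unfolding B_def by auto
  have BU: "unitary_mat n B" unfolding unitary_mat_def
  proof
    show "B \<in> carrier_mat n n" by (rule Bc)
    show "mat_adjoint B * B = 1\<^sub>m n"
    proof (rule eq_matI)
      fix p q assume "p < dim_row (1\<^sub>m n :: complex mat)" "q < dim_col (1\<^sub>m n :: complex mat)"
      hence p: "p < n" and q: "q < n" by auto
      have "(mat_adjoint B * B) $$ (p,q) = (\<Sum>k<Suc n1. cnj (B $$ (k,p)) * B $$ (k,q))"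
        using p q Bc unfolding n_def by (simp add: scalar_prod_def atLeast0LessThan)
      also have "\<dots> = cnj (B $$ (0,p)) * B $$ (0,q) + (\<Sum>k<n1. cnj (B $$ (Suc k,p)) * B $$ (Suc k,q))"
        by (rule sum.lessThan_Suc_shift)
      also have "\<dots> = 1\<^sub>m n $$ (p,q)"
      proof (cases p)
        case 0 thus ?thesis using p q unfolding B_def n_def by simp
      next
        case (Suc p')
        show ?thesis
        proof (cases q)
          case 0 thus ?thesis using p q Suc unfolding B_def n_def by simp
        next
          case (Suc q')
          have "(\<Sum>k<n1. cnj (B $$ (Suc k,p)) * B $$ (Suc k,q)) = (\<Sum>k<n1. cnj (U3 $$ (k,p')) * U3 $$ (k,q'))"
            using p q \<open>p = Suc p'\<close> Suc unfolding B_def n_def by (intro sum.cong refl) simp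
          also have "\<dots> = (if p' = q' then 1 else 0)"
            using unitary_entries[OF U3] p q \<open>p = Suc p'\<close> Suc unfolding n_def by simp
          finally show ?thesis using p q \<open>p = Suc p'\<close> Suc unfolding B_def n_def by simp
        qed
      qed
      finally show "(mat_adjoint B * B) $$ (p,q) = 1\<^sub>m n $$ (p,q)" .
    qed (use Bc in auto)
  qed
  have A'e: "A' = B * rdiag n d * mat_adjoint B"
  proof (rule eq_matI)
    fix p q assume "p < dim_row (B * rdiag n d * mat_adjoint B)" "q < dim_col (B * rdiag n d * mat_adjoint B)"
    hence p: "p < n" and q: "q < n" using Bc by auto
    have "(B * rdiag n d * mat_adjoint B) $$ (p,q) = (\<Sum>k<Suc n1. B $$ (p,k) * complex_of_real (d k) * cnj (B $$ (q,k)))"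
      using udu_index[OF Bc p q] unfolding n_def .
    also have "\<dots> = B $$ (p,0) * complex_of_real (d 0) * cnj (B $$ (q,0)) +
       (\<Sum>k<n1. B $$ (p,Suc k) * complex_of_real (d (Suc k)) * cnj (B $$ (q,Suc k)))"
      by (rule sum.lessThan_Suc_shift)
    also have "\<dots> = A' $$ (p,q)"
    proof (cases p)
      case 0 thus ?thesis using p q A'0' ereal ecnj unfolding B_def n_def d_def by simp
    next
      case (Suc p')
      show ?thesis
      proof (cases q)
        case 0 thus ?thesis using p q Suc A'0 unfolding B_def n_def d_def by simp
      next
        case (Suc q')
        have "(\<Sum>k<n1. B $$ (p,Suc k) * complex_of_real (d (Suc k)) * cnj (B $$ (q,Suc k)))
            = (\<Sum>k<n1. U3 $$ (p',k) * complex_of_real (d3 k) * cnj (U3 $$ (q',k)))"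
          using p q \<open>p = Suc p'\<close> Suc unfolding B_def n_def d_def by (intro sum.cong refl) simp
        also have "\<dots> = A3 $$ (p',q')" unfolding A3e
          using udu_index[OF U3c, of p' q'] p q \<open>p = Suc p'\<close> Suc unfolding n_def by simp
        also have "\<dots> = A' $$ (p,q)" using p q \<open>p = Suc p'\<close> Suc unfolding A3_def n_def by simp
        finally show ?thesis using p q \<open>p = Suc p'\<close> Suc unfolding B_def n_def by simp
      qed
    qed
    finally show "A' $$ (p,q) = (B * rdiag n d * mat_adjoint B) $$ (p,q)" by simp
  qed (use A'c Bc in auto)
  have "A = W * A' * mat_adjoint W" unfolding A'_def using Ac Wc
    by (simp add: s unitary_right2[OF W, of _ n] unitary_right[OF W])
  also have "\<dots> = (W * B) * rdiag n d * mat_adjoint (W * B)" unfolding A'e using Wc Bc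
    by (simp add: s adj_mult[of _ n n _ n])
  finally show ?case using unitary_mult[OF W BU] unfolding n_def by blast
qed



lemma conj_scalar: assumes U: "unitary_mat n U"
  shows "mat_adjoint U * (a \<cdot>\<^sub>m 1\<^sub>m n) * U = a \<cdot>\<^sub>m 1\<^sub>m n"
    "U * (a \<cdot>\<^sub>m 1\<^sub>m n) * mat_adjoint U = a \<cdot>\<^sub>m 1\<^sub>m n"
proof -
  have Uc: "U \<in> carrier_mat n n" using U by (rule unitary_carrier)
  have "mat_adjoint U * (a \<cdot>\<^sub>m 1\<^sub>m n) * U = a \<cdot>\<^sub>m (mat_adjoint U * U)"
    using Uc by (simp add: mult_smult_distrib[of _ n n _ n] mult_smult_assoc_mat[of _ n n _ n])
  thus "mat_adjoint U * (a \<cdot>\<^sub>m 1\<^sub>m n) * U = a \<cdot>\<^sub>m 1\<^sub>m n" using unitary_left[OF U] by simp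
  have "U * (a \<cdot>\<^sub>m 1\<^sub>m n) * mat_adjoint U = a \<cdot>\<^sub>m (U * mat_adjoint U)"
    using Uc by (simp add: mult_smult_distrib[of _ n n _ n] mult_smult_assoc_mat[of _ n n _ n])
  thus "U * (a \<cdot>\<^sub>m 1\<^sub>m n) * mat_adjoint U = a \<cdot>\<^sub>m 1\<^sub>m n" using unitary_right[OF U] by simp
qed

lemma pos_eig: assumes sp: "strictly_positive n c" and U: "unitary_mat n U"
  and ce: "c = U * rdiag n d * mat_adjoint U" and i: "i < n"
  shows "d i > 0"
proof -
  have Uc: "U \<in> carrier_mat n n" using U by (rule unitary_carrier)
  note s = assoc_mult_mat[of _ n n _ n _ n] mult_carrier_mat[of _ n n _ n]
  define w where "w = col U i"
  have wc: "w \<in> carrier_vec n" unfolding w_def using Uc by auto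
  have "c * U = U * rdiag n d" unfolding ce using Uc by (simp add: s unitary_left[OF U])
  have cc: "c \<in> carrier_mat n n" unfolding ce using Uc by (intro mult_carrier_mat[of _ n n] adj_carrier mat_diag_dim)
  have "c *\<^sub>v w = col (c * U) i" unfolding w_def by (rule col_mult2[OF cc Uc i, symmetric])
  also have "\<dots> = col (U * rdiag n d) i" using \<open>c * U = U * rdiag n d\<close> by simp
  also have "\<dots> = complex_of_real (d i) \<cdot>\<^sub>v w"
    unfolding w_def mat_diag_mult_right[OF Uc] using Uc i by (intro eq_vecI) auto
  finally have cw: "c *\<^sub>v w = complex_of_real (d i) \<cdot>\<^sub>v w" .
  have ww: "w \<bullet>c w = 1"
  proof -
    have "w \<bullet>c w = (\<Sum>k<n. w $ k * cnj (w $ k))" by (rule cprod_sum[OF wc wc])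
    also have "\<dots> = (\<Sum>k<n. cnj (U $$ (k,i)) * U $$ (k,i))"
      unfolding w_def using Uc i by (intro sum.cong refl) (auto simp: mult.commute)
    also have "\<dots> = 1" using unitary_entries[OF U i i] by simp
    finally show ?thesis .
  qed
  have w0: "w \<noteq> 0\<^sub>v n" using ww by auto
  have "0 < Re ((c *\<^sub>v w) \<bullet>c w)" using sp wc w0 unfolding strictly_positive_def by auto
  also have "(c *\<^sub>v w) \<bullet>c w = complex_of_real (d i) * (w \<bullet>c w)"
    unfolding cw using wc by (simp add: conjugate_complex_def)
  finally show ?thesis using ww by simp
qed



theorem mainTheorem4:
  fixes n m :: nat and \<gamma> :: real and x y c :: "complex mat"
  assumes "n \<ge> 2" and "1 \<le> m" and "m < n" and "coprime m n"
    and "hermitian_mat n x" and "hermitian_mat n y"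
    and "clock_mat n (exp (2 * pi * \<i> * of_nat m / of_nat n)) =
           funcalc n (\<lambda>t. exp (2 * pi * \<i> * complex_of_real t / of_nat n)) x"
    and "shift_mat n = funcalc n (\<lambda>t. exp (2 * pi * \<i> * complex_of_real t / of_nat n)) y"
    and "\<gamma> > 0"
    and "strictly_positive n c"
    and "laplacian x y (mat_log n c) = 0\<^sub>m n n"
    and "cmat_trace c = of_nat n * complex_of_real \<gamma>"
  shows "c = complex_of_real \<gamma> \<cdot>\<^sub>m 1\<^sub>m n"
proof -
  note n2 = assms(1) and cop = assms(4) and xh = assms(5) and yh = assms(6)
    and hu = assms(7) and hv = assms(8) and sp = assms(10) and L = assms(11) and tr = assms(12)
  let ?f = "\<lambda>t. exp (2 * pi * \<i> * complex_of_real t / of_nat n)"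
  have ch: "hermitian_mat n c" using sp unfolding strictly_positive_def by auto
  obtain Ux dx where Ux: "unitary_mat n Ux" and xe: "x = Ux * rdiag n dx * mat_adjoint Ux"
    using spectral[OF xh] by blast
  obtain Uy dy where Uy: "unitary_mat n Uy" and ye: "y = Uy * rdiag n dy * mat_adjoint Uy"
    using spectral[OF yh] by blast
  obtain U d where U: "unitary_mat n U" and ce: "c = U * rdiag n d * mat_adjoint U"
    using spectral[OF ch] by blast
  have Uc: "U \<in> carrier_mat n n" using U by (rule unitary_carrier)
  note s = assoc_mult_mat[of _ n n _ n _ n] mult_carrier_mat[of _ n n _ n]
  define h where "h = mat_log n c"
  have he: "h = U * rdiag n (\<lambda>i. ln (d i)) * mat_adjoint U"
    unfolding h_def mat_log_def by (rule funcalc_eq[OF U ce])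
  have hc: "h \<in> carrier_mat n n" unfolding he using Uc by (intro mult_carrier_mat[of _ n n] adj_carrier mat_diag_dim)
  have hh: "hermitian_mat n h" unfolding hermitian_mat_def
    using hc Uc unfolding he by (simp add: adj_mult[of _ n n _ n] s adj_diag_real)
  from lap_comm[OF xh yh hh L[folded h_def]] have yc: "y * h = h * y" and xc: "x * h = h * x" by auto
  have c1: "h * clock_mat n (exp (2 * pi * \<i> * of_nat m / of_nat n)) = clock_mat n (exp (2 * pi * \<i> * of_nat m / of_nat n)) * h"
    unfolding hu by (rule comm_funcalc[OF Ux xe hc xc[symmetric]])
  have c2: "h * shift_mat n = shift_mat n * h"
    unfolding hv by (rule comm_funcalc[OF Uy ye hc yc[symmetric]])
  define lam where "lam = h $$ (0,0)"
  have hl: "h = lam \<cdot>\<^sub>m 1\<^sub>m n" unfolding lam_def by (rule commutant_scalar[OF cop n2 hc c1 c2])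
  have "rdiag n (\<lambda>i. ln (d i)) = mat_adjoint U * h * U"
    unfolding he using Uc by (simp add: s unitary_left2[OF U, of _ n] unitary_left[OF U])
  also have "\<dots> = lam \<cdot>\<^sub>m 1\<^sub>m n" unfolding hl by (rule conj_scalar(1)[OF U])
  finally have D: "rdiag n (\<lambda>i. ln (d i)) = lam \<cdot>\<^sub>m 1\<^sub>m n" .
  have dpos: "d i > 0" if "i < n" for i using pos_eig[OF sp U ce that] .
  have n0: "0 < n" using n2 by simp
  have deq: "d i = d 0" if i: "i < n" for i
  proof -
    have "complex_of_real (ln (d i)) = lam" using arg_cong[OF D, of "\<lambda>M. M $$ (i,i)"] i by (simp add: mat_diag_def)
    moreover have "complex_of_real (ln (d 0)) = lam" using arg_cong[OF D, of "\<lambda>M. M $$ (0,0)"] n0 by (simp add: mat_diag_def)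
    ultimately have "ln (d i) = ln (d 0)" by (metis of_real_eq_iff)
    thus ?thesis using dpos[OF i] dpos[OF n0] by simp
  qed
  have "rdiag n d = complex_of_real (d 0) \<cdot>\<^sub>m 1\<^sub>m n"
  proof (rule eq_matI)
    fix i j assume "i < dim_row (complex_of_real (d 0) \<cdot>\<^sub>m 1\<^sub>m n)" "j < dim_col (complex_of_real (d 0) \<cdot>\<^sub>m 1\<^sub>m n)"
    hence i: "i < n" and j: "j < n" by auto
    show "rdiag n d $$ (i, j) = (complex_of_real (d 0) \<cdot>\<^sub>m 1\<^sub>m n) $$ (i, j)"
      using i j deq[OF i] by (cases "i = j") (auto simp: mat_diag_def)
  qed auto
  hence c0: "c = complex_of_real (d 0) \<cdot>\<^sub>m 1\<^sub>m n" unfolding ce using conj_scalar(2)[OF U] by simp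
  have "cmat_trace c = of_nat n * complex_of_real (d 0)" unfolding c0 cmat_trace_def by simp
  hence "complex_of_real (d 0) = complex_of_real \<gamma>" using tr n0 by simp
  thus ?thesis unfolding c0 by simp
qed

end
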